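(* Let $m,n\ge1$ and let $\theta\vdash mn$ be $m$-splittable with $m$-split $(\theta^{(0)},\dots,\theta^{(m-1)})$. Then \[ H_\theta(x) = m^{mn} \prod_{r=0}^{m-1} \prod_{j=1}^{m} H_{\theta^{(r)}} \left( \frac{x+r-m+j}{m} \right). \]
   Context: With the rising factorial $x^{(k)}=x(x+1)\cdots(x+k-1)$, $H_\theta(x)=\prod_{i=1}^{l(\theta)}(x-i+1)^{(\theta_i)}=\prod_{w\in\theta}(x+c(w))$, where $c(w)=j-i$ is the content of the cell $w$ in row $i$, column $j$; $H_\emptyset=1$. A set $S\subseteq\mathbb{Z}$ satisfies the charge condition if $S\cap\mathbb{Z}_{\ge0}$ and $\mathbb{Z}_{<0}\setminus S$ are finite and have the same cardinality. For a partition $\lambda=(\lambda_1\ge\lambda_2\ge\cdots)$ (with $\lambda_k=0$ for $k>l(\lambda)$), $S_\lambda=\{\lambda_k-k: k\ge1\}$; $\lambda\mapsto S_\lambda$ is a bijection from partitions to sets satisfying the charge condition. The $m$-split of a set $S$ is $(S_0,\dots,S_{m-1})$ with $S_r=\{a\in\mathbb{Z}: ma+r\in S\}$. A partition $\theta$ is $m$-splittable if every $S_r$ in the $m$-split of $S_\theta$ satisfies the charge condition; its $m$-split is then $(\theta^{(0)},\dots,\theta^{(m-1)})$ where $\theta^{(r)}$ is the partition with $S_{\theta^{(r)}}=S_r$. *)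

theory Defs
  imports Complex_Main
begin

definition is_partition :: "nat list \<Rightarrow> bool" where
  "is_partition la \<longleftrightarrow> sorted (rev la) \<and> 0 \<notin> set la"

definition part :: "nat list \<Rightarrow> nat \<Rightarrow> nat" where
  "part la k = (if 1 \<le> k \<and> k \<le> length la then la ! (k - 1) else 0)"

definition Sset :: "nat list \<Rightarrow> int set" where
  "Sset la = {int (part la k) - int k | k. k \<ge> 1}"

definition charge_cond :: "int set \<Rightarrow> bool" where
  "charge_cond S \<longleftrightarrow> finite (S \<inter> {0..}) \<and> finite ({..<0} - S)
     \<and> card (S \<inter> {0..}) = card ({..<0} - S)"

definition msplit :: "nat \<Rightarrow> int set \<Rightarrow> nat \<Rightarrow> int set" where
  "msplit m S r = {a. int m * a + int r \<in> S}"

definition m_splittable :: "nat \<Rightarrow> nat list \<Rightarrow> bool" where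
  "m_splittable m th \<longleftrightarrow> (\<forall>r<m. charge_cond (msplit m (Sset th) r))"

definition H :: "nat list \<Rightarrow> 'a::field_char_0 \<Rightarrow> 'a" where
  "H la x = (\<Prod>i=1..length la. pochhammer (x - of_nat i + 1) (la ! (i - 1)))"

end

theory Submission imports Defs "HOL-Computational_Algebra.Polynomial" begin


definition polyfun :: "('a::comm_ring_1 \<Rightarrow> 'a) \<Rightarrow> bool" where
  "polyfun f \<longleftrightarrow> (\<exists>p. \<forall>x. f x = poly p x)"

lemma polyfun_const: "polyfun (\<lambda>x. c)"
  unfolding polyfun_def by (rule exI[of _ "[:c:]"]) simp

lemma polyfun_id: "polyfun (\<lambda>x. x)"
  unfolding polyfun_def by (rule exI[of _ "[:0,1:]"]) simp

lemma polyfun_add: "polyfun f \<Longrightarrow> polyfun g \<Longrightarrow> polyfun (\<lambda>x. f x + g x)"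
  unfolding polyfun_def by (metis poly_add)

lemma polyfun_diff: "polyfun f \<Longrightarrow> polyfun g \<Longrightarrow> polyfun (\<lambda>x. f x - g x)"
  unfolding polyfun_def by (metis poly_diff)

lemma polyfun_mult: "polyfun f \<Longrightarrow> polyfun g \<Longrightarrow> polyfun (\<lambda>x. f x * g x)"
  unfolding polyfun_def by (metis poly_mult)

lemma polyfun_comp: "polyfun f \<Longrightarrow> polyfun g \<Longrightarrow> polyfun (\<lambda>x. f (g x))"
  unfolding polyfun_def by (metis poly_pcompose)

lemma polyfun_prod: "(\<And>i. i \<in> A \<Longrightarrow> polyfun (f i)) \<Longrightarrow> polyfun (\<lambda>x. \<Prod>i\<in>A. f i x)"
proof (induction A rule: infinite_finite_induct)
  case (infinite A) then show ?case by (simp add: polyfun_const)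
next
  case empty then show ?case by (simp add: polyfun_const)
next
  case (insert a A) then show ?case by (simp add: polyfun_mult)
qed

lemma polyfun_pochhammer: "polyfun f \<Longrightarrow> polyfun (\<lambda>x. pochhammer (f x) k)"
  unfolding pochhammer_prod by (intro polyfun_prod polyfun_add polyfun_const)

lemma polyfun_H: "polyfun (H la :: 'a::field_char_0 \<Rightarrow> 'a)"
  unfolding H_def
  by (intro polyfun_prod polyfun_pochhammer polyfun_add polyfun_diff polyfun_const polyfun_id)

lemma polyfun_cancel:
  fixes f g h :: "'a::field_char_0 \<Rightarrow> 'a"
  assumes "polyfun f" "polyfun g" "polyfun h" "\<And>x. f x * g x = h x * g x" "g x0 \<noteq> 0"
  shows "f x = h x"
proof -
  obtain p q r where p: "\<And>x. f x = poly p x" and q: "\<And>x. h x = poly q x" and r: "\<And>x. g x = poly r x"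
    using assms(1-3) unfolding polyfun_def by metis
  have "poly (p * r) = poly (q * r)" using assms(4) by (auto simp: p q r)
  then have "p * r = q * r" by (simp add: poly_eq_poly_eq_iff)
  moreover have "r \<noteq> 0" using assms(5) r by auto
  ultimately have "p = q" by simp
  then show ?thesis by (simp add: p q)
qed

lemma poch_mult:
  fixes z :: "'a::field_char_0"
  assumes "m \<ge> 1"
  shows "pochhammer z (m * k) = of_nat m ^ (m * k) * (\<Prod>j<m. pochhammer ((z + of_nat j) / of_nat m) k)"
proof (induction k)
  case 0 then show ?case by simp
next
  case (Suc k)
  have mnz: "(of_nat m :: 'a) \<noteq> 0" using assms by simp
  have "pochhammer z (m * Suc k) = pochhammer z (m * k) * pochhammer (z + of_nat (m*k)) m"
    using pochhammer_product'[of z "m*k" m] by (simp add: add.commute)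
  also have "pochhammer (z + of_nat (m*k)) m = (\<Prod>j<m. z + of_nat (m*k) + of_nat j)"
    by (simp add: pochhammer_prod atLeast0LessThan)
  also have "\<dots> = (\<Prod>j<m. of_nat m * ((z + of_nat j) / of_nat m + of_nat k))"
    by (intro prod.cong refl) (simp add: field_simps mnz)
  also have "\<dots> = of_nat m ^ m * (\<Prod>j<m. ((z + of_nat j) / of_nat m + of_nat k))"
    by (simp add: prod.distrib)
  finally show ?case using Suc
    by (simp add: pochhammer_Suc prod.distrib power_add mult_ac)
qed



lemma part_mono:
  assumes "is_partition la" "1 \<le> i" "i \<le> j"
  shows "part la j \<le> part la i"
  using assms sorted_rev_nth_mono[of la "i-1" "j-1"]
  unfolding is_partition_def Defs.part_def by auto

definition bf :: "nat list \<Rightarrow> nat \<Rightarrow> int" where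
  "bf la i = int (part la i) - int i"

lemma bf_inj:
  assumes "is_partition la"
  shows "inj_on (bf la) {1..}"
proof
  fix i j assume ij: "i \<in> {1..}" "j \<in> {1..}" "bf la i = bf la j"
  show "i = j"
  proof (rule ccontr)
    assume "i \<noteq> j"
    then consider "i < j" | "j < i" by linarith
    then show False
    proof cases
      case 1 then show False using part_mono[OF assms, of i j] ij unfolding bf_def by auto
    next
      case 2 then show False using part_mono[OF assms, of j i] ij unfolding bf_def by auto
    qed
  qed
qed

lemma Sset_trunc:
  assumes "length la \<le> N"
  shows "Sset la \<inter> {-int N..} = bf la ` {1..N}"
proof
  show "Sset la \<inter> {-int N..} \<subseteq> bf la ` {1..N}"
  proof
    fix t assume "t \<in> Sset la \<inter> {-int N..}"
    then obtain k where k: "k \<ge> 1" "t = int (part la k) - int k" "t \<ge> - int N"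
      unfolding Sset_def by auto
    have "k \<le> N"
    proof (rule ccontr)
      assume "\<not> k \<le> N"
      then have "part la k = 0" using assms unfolding Defs.part_def by auto
      then show False using k \<open>\<not> k \<le> N\<close> by auto
    qed
    then show "t \<in> bf la ` {1..N}" using k unfolding bf_def by auto
  qed
  show "bf la ` {1..N} \<subseteq> Sset la \<inter> {-int N..}"
    unfolding Sset_def bf_def by auto
qed

lemma trunc_card:
  assumes "is_partition la" "length la \<le> N"
  shows "card (Sset la \<inter> {-int N..}) = N" and "finite (Sset la \<inter> {-int N..})"
proof -
  have inj: "inj_on (bf la) {1..N}" using bf_inj[OF assms(1)] by (rule inj_on_subset) auto
  show "card (Sset la \<inter> {-int N..}) = N"
    unfolding Sset_trunc[OF assms(2)] using card_image[OF inj] by simp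
  show "finite (Sset la \<inter> {-int N..})"
    unfolding Sset_trunc[OF assms(2)] by simp
qed

lemma part_prod_ext:
  assumes "length la \<le> N" and that: "\<And>i. f i 0 = (1::'a::comm_monoid_mult)"
  shows "(\<Prod>i=1..length la. f i (la ! (i - 1))) = (\<Prod>i=1..N. f i (part la i))"
proof -
  have "(\<Prod>i=1..length la. f i (la ! (i - 1))) = (\<Prod>i=1..length la. f i (part la i))"
    by (intro prod.cong refl) (auto simp: Defs.part_def)
  also have "\<dots> = (\<Prod>i=1..N. f i (part la i))"
    using assms by (intro prod.mono_neutral_left) (auto simp: Defs.part_def that)
  finally show ?thesis .
qed

lemma part_sum_ext:
  assumes "length la \<le> N"
  shows "(\<Sum>i=1..N. part la i) = sum_list la"
proof -
  have "(\<Sum>i=1..N. part la i) = (\<Sum>i=1..length la. part la i)"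
    using assms by (intro sum.mono_neutral_right) (auto simp: Defs.part_def)
  also have "\<dots> = (\<Sum>i<length la. la ! i)"
    by (rule sum.reindex_bij_witness[of _ Suc "\<lambda>i. i - 1"]) (auto simp: Defs.part_def)
  also have "\<dots> = sum_list la" by (simp add: sum_list_sum_nth atLeast0LessThan)
  finally show ?thesis .
qed

definition E :: "nat \<Rightarrow> 'a::comm_semiring_1 \<Rightarrow> 'a" where
  "E N y = (\<Prod>i=1..N. pochhammer y (N - i))"

definition cc :: "nat \<Rightarrow> nat" where
  "cc N = (\<Sum>i=1..N. N - i)"

lemma G_prod:
  fixes y :: "'a::field_char_0"
  assumes "is_partition la" "length la \<le> N"
  shows "(\<Prod>t\<in>Sset la \<inter> {-int N..}. pochhammer y (nat (t + int N)))
         = H la (y + of_nat N - 1) * E N y"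
proof -
  have inj: "inj_on (bf la) {1..N}" using bf_inj[OF assms(1)] by (rule inj_on_subset) auto
  have "(\<Prod>t\<in>Sset la \<inter> {-int N..}. pochhammer y (nat (t + int N)))
      = (\<Prod>i=1..N. pochhammer y (nat (bf la i + int N)))"
    unfolding Sset_trunc[OF assms(2)] by (rule prod.reindex[OF inj, unfolded comp_def])
  also have "\<dots> = (\<Prod>i=1..N. pochhammer y (N - i) * pochhammer (y + of_nat N - 1 - of_nat i + 1) (part la i))"
  proof (intro prod.cong refl)
    fix i assume i: "i \<in> {1..N}"
    have "nat (bf la i + int N) = (N - i) + part la i" using i unfolding bf_def by auto
    moreover have "y + of_nat (N - i) = y + of_nat N - 1 - of_nat i + 1" using i by (simp add: of_nat_diff)
    ultimately show "pochhammer y (nat (bf la i + int N)) = pochhammer y (N - i) * pochhammer (y + of_nat N - 1 - of_nat i + 1) (part la i)"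
      by (simp add: pochhammer_product')
  qed
  also have "\<dots> = E N y * H la (y + of_nat N - 1)"
    unfolding prod.distrib E_def H_def
    by (subst part_prod_ext[OF assms(2)]) simp_all
  finally show ?thesis by simp
qed

lemma G_sum:
  assumes "is_partition la" "length la \<le> N"
  shows "(\<Sum>t\<in>Sset la \<inter> {-int N..}. nat (t + int N)) = sum_list la + cc N"
proof -
  have inj: "inj_on (bf la) {1..N}" using bf_inj[OF assms(1)] by (rule inj_on_subset) auto
  have "(\<Sum>t\<in>Sset la \<inter> {-int N..}. nat (t + int N)) = (\<Sum>i=1..N. nat (bf la i + int N))"
    unfolding Sset_trunc[OF assms(2)] by (rule sum.reindex[OF inj, unfolded comp_def])
  also have "\<dots> = (\<Sum>i=1..N. part la i + (N - i))"
    by (intro sum.cong refl) (auto simp: bf_def)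
  also have "\<dots> = sum_list la + cc N"
    unfolding sum.distrib cc_def part_sum_ext[OF assms(2)] ..
  finally show ?thesis .
qed



lemma split_bij:
  assumes "m \<ge> 1"
  shows "bij_betw (\<lambda>(r,a). int m * a + int r) (SIGMA r:{..<m}. msplit m S r \<inter> {-int M..})
           (S \<inter> {-int (m*M)..})"
proof (rule bij_betw_byWitness[where f' = "\<lambda>t. (nat (t mod int m), t div int m)"])
  show "\<forall>x\<in>SIGMA r:{..<m}. msplit m S r \<inter> {- int M..}.
       (\<lambda>t. (nat (t mod int m), t div int m)) ((\<lambda>(r,a). int m * a + int r) x) = x"
  proof
    fix x assume x: "x \<in> (SIGMA r:{..<m}. msplit m S r \<inter> {- int M..})"
    obtain r a where [simp]: "x = (r,a)" by (cases x)
    have r: "r < m" using x by auto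
    have "(int m * a + int r) mod int m = int r" using r
      by simp
    moreover have "(int m * a + int r) div int m = a" using r
      by simp
    ultimately show "(\<lambda>t. (nat (t mod int m), t div int m)) ((\<lambda>(r,a). int m * a + int r) x) = x" by simp
  qed
  show "\<forall>t\<in>S \<inter> {- int (m * M)..}. (\<lambda>(r,a). int m * a + int r) (nat (t mod int m), t div int m) = t"
    using assms by auto
  show "(\<lambda>(r,a). int m * a + int r) ` (SIGMA r:{..<m}. msplit m S r \<inter> {- int M..}) \<subseteq> S \<inter> {- int (m * M)..}"
  proof
    fix t assume "t \<in> (\<lambda>(r,a). int m * a + int r) ` (SIGMA r:{..<m}. msplit m S r \<inter> {- int M..})"
    then obtain r a where "r < m" "int m * a + int r \<in> S" "a \<ge> - int M" "t = int m * a + int r"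
      unfolding msplit_def by auto
    moreover have "int m * a \<ge> int m * (- int M)" using \<open>a \<ge> - int M\<close> by (intro mult_left_mono) auto
    ultimately show "t \<in> S \<inter> {- int (m * M)..}" by auto
  qed
  show "(\<lambda>t. (nat (t mod int m), t div int m)) ` (S \<inter> {- int (m * M)..}) \<subseteq> (SIGMA r:{..<m}. msplit m S r \<inter> {- int M..})"
  proof
    fix p assume "p \<in> (\<lambda>t. (nat (t mod int m), t div int m)) ` (S \<inter> {- int (m * M)..})"
    then obtain t where t: "t \<in> S" "t \<ge> - int (m*M)" "p = (nat (t mod int m), t div int m)" by auto
    have mp: "int m > 0" using assms by auto
    have "t mod int m \<ge> 0" "t mod int m < int m" using mp by auto
    moreover have "int m * (t div int m) + t mod int m = t" by simp
    moreover have "t div int m \<ge> - int M"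
    proof -
      have e: "- int (m*M) = int m * (- int M)" by simp
      have "(int m * (- int M)) div int m = - int M" using mp by (metis less_irrefl nonzero_mult_div_cancel_left)
      then have "(- int (m*M)) div int m = - int M" by (subst e)
      then show ?thesis using zdiv_mono1[OF t(2) mp] by simp
    qed
    ultimately show "p \<in> (SIGMA r:{..<m}. msplit m S r \<inter> {- int M..})"
      using t unfolding msplit_def by auto
  qed
qed



lemma K_prod:
  fixes y :: "'a::field_char_0"
  assumes m: "m \<ge> 1" and la: "is_partition la" "length la \<le> m*M"
    and las: "\<forall>r<m. is_partition (las r) \<and> length (las r) \<le> M \<and> Sset (las r) = msplit m (Sset la) r"
  shows "H la (y + of_nat (m*M) - 1) * E (m*M) y =
    (\<Prod>r<m. pochhammer y r ^ M * of_nat m ^ (m * (sum_list (las r) + cc M)) *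
        (\<Prod>j<m. H (las r) ((y + of_nat r + of_nat j) / of_nat m + of_nat M - 1) *
                 E M ((y + of_nat r + of_nat j) / of_nat m)))"
proof -
  define A where "A r = msplit m (Sset la) r \<inter> {-int M..}" for r
  have A: "A r = Sset (las r) \<inter> {-int M..}" if "r < m" for r using las that by (simp add: A_def)
  have finA: "finite (A r)" if "r < m" for r using trunc_card(2)[of "las r" M] las that A by auto
  have "H la (y + of_nat (m*M) - 1) * E (m*M) y
      = (\<Prod>t\<in>Sset la \<inter> {-int (m*M)..}. pochhammer y (nat (t + int (m*M))))"
    by (rule G_prod[OF la, symmetric])
  also have "\<dots> = (\<Prod>p\<in>(SIGMA r:{..<m}. A r). pochhammer y (nat ((\<lambda>(r,a). int m * a + int r) p + int (m*M))))"
    unfolding A_def by (rule prod.reindex_bij_betw[OF split_bij[OF m], symmetric])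
  also have "\<dots> = (\<Prod>r<m. \<Prod>a\<in>A r. pochhammer y (nat (int m * a + int r + int (m*M))))"
    using prod.Sigma[of "{..<m}" A "\<lambda>r a. pochhammer y (nat (int m * a + int r + int (m*M)))"] finA
    by (simp add: split_def)
  also have "\<dots> = (\<Prod>r<m. \<Prod>a\<in>A r. pochhammer y r * (of_nat m ^ (m * nat (a + int M)) *
        (\<Prod>j<m. pochhammer ((y + of_nat r + of_nat j) / of_nat m) (nat (a + int M)))))"
  proof (intro prod.cong refl)
    fix r a assume r: "r \<in> {..<m}" and a: "a \<in> A r"
    have "a \<ge> - int M" using a unfolding A_def by auto
    then have "int (r + m * nat (a + int M)) = int m * a + int r + int (m*M)"
      by (simp add: algebra_simps)
    then have "nat (int m * a + int r + int (m*M)) = r + m * nat (a + int M)"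
      by (metis nat_int)
    then show "pochhammer y (nat (int m * a + int r + int (m*M))) = pochhammer y r * (of_nat m ^ (m * nat (a + int M)) *
        (\<Prod>j<m. pochhammer ((y + of_nat r + of_nat j) / of_nat m) (nat (a + int M))))"
      by (simp add: pochhammer_product' poch_mult[OF m] add.assoc)
  qed
  also have "\<dots> = (\<Prod>r<m. pochhammer y r ^ M * of_nat m ^ (m * (sum_list (las r) + cc M)) *
        (\<Prod>j<m. H (las r) ((y + of_nat r + of_nat j) / of_nat m + of_nat M - 1) *
                 E M ((y + of_nat r + of_nat j) / of_nat m)))"
  proof (intro prod.cong refl)
    fix r assume r: "r \<in> {..<m}"
    have p: "is_partition (las r)" "length (las r) \<le> M" using las r by auto
    have "(\<Prod>a\<in>A r. pochhammer y r * (of_nat m ^ (m * nat (a + int M)) *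
        (\<Prod>j<m. pochhammer ((y + of_nat r + of_nat j) / of_nat m) (nat (a + int M)))))
      = pochhammer y r ^ card (A r) * of_nat m ^ (\<Sum>a\<in>A r. m * nat (a + int M)) *
        (\<Prod>j<m. \<Prod>a\<in>A r. pochhammer ((y + of_nat r + of_nat j) / of_nat m) (nat (a + int M)))"
      by (simp add: prod.distrib power_sum prod.swap[of _ "A r"] mult.assoc)
    also have "card (A r) = M" using trunc_card(1)[OF p] A r by simp
    also have "(\<Sum>a\<in>A r. m * nat (a + int M)) = m * (sum_list (las r) + cc M)"
      using G_sum[OF p] A r by (simp add: sum_distrib_left[symmetric])
    also have "(\<Prod>j<m. \<Prod>a\<in>A r. pochhammer ((y + of_nat r + of_nat j) / of_nat m) (nat (a + int M)))
        = (\<Prod>j<m. H (las r) ((y + of_nat r + of_nat j) / of_nat m + of_nat M - 1) *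
                 E M ((y + of_nat r + of_nat j) / of_nat m))"
      using A r by (simp add: G_prod[OF p])
    finally show "(\<Prod>a\<in>A r. pochhammer y r * (of_nat m ^ (m * nat (a + int M)) *
        (\<Prod>j<m. pochhammer ((y + of_nat r + of_nat j) / of_nat m) (nat (a + int M)))))
      = pochhammer y r ^ M * of_nat m ^ (m * (sum_list (las r) + cc M)) *
        (\<Prod>j<m. H (las r) ((y + of_nat r + of_nat j) / of_nat m + of_nat M - 1) *
                 E M ((y + of_nat r + of_nat j) / of_nat m))" .
  qed
  finally show ?thesis .
qed

lemma K_sum:
  assumes m: "m \<ge> 1" and la: "is_partition la" "length la \<le> m*M"
    and las: "\<forall>r<m. is_partition (las r) \<and> length (las r) \<le> M \<and> Sset (las r) = msplit m (Sset la) r"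
  shows "sum_list la + cc (m*M) = m * (\<Sum>r<m. sum_list (las r) + cc M) + M * (\<Sum>r<m. r)"
proof -
  define A where "A r = msplit m (Sset la) r \<inter> {-int M..}" for r
  have A: "A r = Sset (las r) \<inter> {-int M..}" if "r < m" for r using las that by (simp add: A_def)
  have finA: "finite (A r)" if "r < m" for r using trunc_card(2)[of "las r" M] las that A by auto
  have "sum_list la + cc (m*M) = (\<Sum>t\<in>Sset la \<inter> {-int (m*M)..}. nat (t + int (m*M)))"
    by (rule G_sum[OF la, symmetric])
  also have "\<dots> = (\<Sum>p\<in>(SIGMA r:{..<m}. A r). nat ((\<lambda>(r,a). int m * a + int r) p + int (m*M)))"
    unfolding A_def by (rule sum.reindex_bij_betw[OF split_bij[OF m], symmetric])
  also have "\<dots> = (\<Sum>r<m. \<Sum>a\<in>A r. nat (int m * a + int r + int (m*M)))"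
    using sum.Sigma[of "{..<m}" A "\<lambda>r a. nat (int m * a + int r + int (m*M))"] finA
    by (simp add: split_def)
  also have "\<dots> = (\<Sum>r<m. \<Sum>a\<in>A r. r + m * nat (a + int M))"
  proof (intro sum.cong refl)
    fix r a assume r: "r \<in> {..<m}" and a: "a \<in> A r"
    have "a \<ge> - int M" using a unfolding A_def by auto
    then have "int (r + m * nat (a + int M)) = int m * a + int r + int (m*M)"
      by (simp add: algebra_simps)
    then show "nat (int m * a + int r + int (m*M)) = r + m * nat (a + int M)"
      by (metis nat_int)
  qed
  also have "\<dots> = (\<Sum>r<m. M * r + m * (sum_list (las r) + cc M))"
  proof (intro sum.cong refl)
    fix r assume r: "r \<in> {..<m}"
    have p: "is_partition (las r)" "length (las r) \<le> M" using las r by auto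
    have "(\<Sum>a\<in>A r. r + m * nat (a + int M)) = card (A r) * r + m * (\<Sum>a\<in>A r. nat (a + int M))"
      by (simp add: sum.distrib sum_distrib_left)
    also have "card (A r) = M" using trunc_card(1)[OF p] A r by simp
    also have "(\<Sum>a\<in>A r. nat (a + int M)) = sum_list (las r) + cc M" using G_sum[OF p] A r by simp
    finally show "(\<Sum>a\<in>A r. r + m * nat (a + int M)) = M * r + m * (sum_list (las r) + cc M)" .
  qed
  also have "\<dots> = m * (\<Sum>r<m. sum_list (las r) + cc M) + M * (\<Sum>r<m. r)"
    unfolding sum.distrib sum_distrib_left[symmetric] by simp
  finally show ?thesis .
qed



lemma polyfun_div: "polyfun f \<Longrightarrow> polyfun (\<lambda>x. f x / (c::'a::field))"
  unfolding divide_inverse by (rule polyfun_mult[OF _ polyfun_const])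

lemma Sset_Nil: "Sset [] = {t. t < 0}"
proof
  show "Sset [] \<subseteq> {t. t < 0}" by (auto simp: Sset_def Defs.part_def)
  show "{t. t < 0} \<subseteq> Sset []"
  proof
    fix t :: int assume "t \<in> {t. t < 0}"
    then have "t = int (part [] (nat (-t))) - int (nat (-t))" "nat (-t) \<ge> 1"
      by (auto simp: Defs.part_def)
    then show "t \<in> Sset []" unfolding Sset_def by blast
  qed
qed

lemma msplit_Nil:
  assumes "r < m"
  shows "msplit m (Sset []) r = Sset []"
proof -
  have "int m * a + int r < 0 \<longleftrightarrow> a < 0" for a
  proof
    assume "int m * a + int r < 0"
    then show "a < 0" by (metis add_nonneg_nonneg not_le of_nat_0_le_iff zero_le_mult_iff)
  next
    assume "a < 0"
    then have "a \<le> -1" by simp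
    then have "int m * a \<le> int m * (-1)" by (intro mult_left_mono) auto
    then show "int m * a + int r < 0" using assms by simp
  qed
  then show ?thesis unfolding msplit_def Sset_Nil by auto
qed

lemma E_nonzero: "E N (1::'a::field_char_0) \<noteq> 0"
  unfolding E_def by (simp add: pochhammer_fact[symmetric])

theorem mainTheorem4:
  fixes m n :: nat and th :: "nat list" and ths :: "nat \<Rightarrow> nat list" and x :: "'a::field_char_0"
  assumes "m \<ge> 1" and "n \<ge> 1"
    and "is_partition th" and "sum_list th = m * n"
    and "m_splittable m th"
    and "\<forall>r<m. is_partition (ths r) \<and> Sset (ths r) = msplit m (Sset th) r"
  shows "H th x = of_nat m ^ (m * n) *
           (\<Prod>r<m. \<Prod>j=1..m. H (ths r) ((x + of_nat r - of_nat m + of_nat j) / of_nat m))"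
proof -
  note m = assms(1)
  define M where "M = length th + (\<Sum>r<m. length (ths r))"
  have lenth: "length th \<le> m * M" unfolding M_def using m
    by (metis dual_order.trans le_add1 mult_1 mult_le_mono1)
  have lens: "length (ths r) \<le> M" if "r < m" for r
  proof -
    have "length (ths r) \<le> (\<Sum>r<m. length (ths r))"
      using that by (intro member_le_sum) auto
    then show ?thesis unfolding M_def by simp
  qed
  have las: "\<forall>r<m. is_partition (ths r) \<and> length (ths r) \<le> M \<and> Sset (ths r) = msplit m (Sset th) r"
    using assms(6) lens by auto
  have nil: "is_partition []" by (simp add: is_partition_def)
  have las0: "\<forall>r<m. is_partition ([]::nat list) \<and> length ([]::nat list) \<le> M \<and> Sset [] = msplit m (Sset []) r"
    using nil msplit_Nil by auto
  have sumeq: "(\<Sum>r<m. sum_list (ths r)) = n"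
  proof -
    have a: "sum_list th + cc (m*M) = m * (\<Sum>r<m. sum_list (ths r) + cc M) + M * (\<Sum>r<m. r)"
      by (rule K_sum[OF m assms(3) lenth las])
    have b: "sum_list [] + cc (m*M) = m * (\<Sum>r<m. sum_list [] + cc M) + M * (\<Sum>r<m. r)"
      by (rule K_sum[OF m nil _ las0]) simp
    from a b have "sum_list th = m * (\<Sum>r<m. sum_list (ths r))"
      by (simp add: sum.distrib distrib_left)
    then show ?thesis using assms(4) m by simp
  qed
  define D :: "'a \<Rightarrow> 'a" where "D x = E (m*M) (x - of_nat (m*M) + 1)" for x
  define R :: "'a \<Rightarrow> 'a" where "R x = of_nat m ^ (m * n) *
           (\<Prod>r<m. \<Prod>j=1..m. H (ths r) ((x + of_nat r - of_nat m + of_nat j) / of_nat m))" for x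
  have key: "H th x * D x = R x * D x" for x
  proof -
    define y where "y = x - of_nat (m*M) + 1"
    have xy: "y + of_nat (m*M) - 1 = x" unfolding y_def by simp
    have Dy: "D x = E (m*M) y" unfolding D_def y_def ..
    define z where "z r j = (y + of_nat r + of_nat j) / of_nat m" for r j :: nat
    define Q where "Q r = pochhammer y r ^ M * of_nat m ^ (m * cc M) * (\<Prod>j<m. E M (z r j))" for r
    define Hr where "Hr r = (\<Prod>j<m. H (ths r) (z r j + of_nat M - 1))" for r
    have k1: "H th x * D x = (\<Prod>r<m. pochhammer y r ^ M * of_nat m ^ (m * (sum_list (ths r) + cc M)) *
        (\<Prod>j<m. H (ths r) (z r j + of_nat M - 1) * E M (z r j)))"
      unfolding Dy z_def using K_prod[OF m assms(3) lenth las, of y] unfolding xy .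
    also have "\<dots> = (\<Prod>r<m. (of_nat m ^ (m * sum_list (ths r)) * Hr r) * Q r)"
      by (intro prod.cong refl) (simp add: Q_def Hr_def prod.distrib power_add distrib_left mult_ac)
    also have "\<dots> = of_nat m ^ (m * n) * (\<Prod>r<m. Hr r) * (\<Prod>r<m. Q r)"
      by (simp add: prod.distrib power_sum[symmetric] sum_distrib_left[symmetric] sumeq)
    finally have k1': "H th x * D x = of_nat m ^ (m * n) * (\<Prod>r<m. Hr r) * (\<Prod>r<m. Q r)" .
    have k0: "H [] x * D x = (\<Prod>r<m. pochhammer y r ^ M * of_nat m ^ (m * (sum_list [] + cc M)) *
        (\<Prod>j<m. H [] (z r j + of_nat M - 1) * E M (z r j)))"
      unfolding Dy z_def using K_prod[OF m nil _ las0, of y] unfolding xy by simp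
    then have k0': "D x = (\<Prod>r<m. Q r)" by (simp add: H_def Q_def)
    have hr: "Hr r = (\<Prod>j=1..m. H (ths r) ((x + of_nat r - of_nat m + of_nat j) / of_nat m))" for r
    proof -
      have "(\<Prod>j=1..m. H (ths r) ((x + of_nat r - of_nat m + of_nat j) / of_nat m))
          = (\<Prod>j<m. H (ths r) ((x + of_nat r - of_nat m + of_nat (Suc j)) / of_nat m))"
        by (simp add: prod.atLeast1_atMost_eq)
      also have "\<dots> = Hr r" unfolding Hr_def
      proof (intro prod.cong refl)
        fix j
        have mnz: "(of_nat m :: 'a) \<noteq> 0" using m by simp
        have "(x + of_nat r - of_nat m + of_nat (Suc j)) / of_nat m = z r j + of_nat M - 1"
          unfolding z_def y_def using mnz by (simp add: field_simps)
        then show "H (ths r) ((x + of_nat r - of_nat m + of_nat (Suc j)) / of_nat m) = H (ths r) (z r j + of_nat M - 1)"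
          by simp
      qed
      finally show ?thesis by simp
    qed
    show ?thesis using k1' k0' by (simp add: R_def hr)
  qed
  have pf: "polyfun (H th :: 'a \<Rightarrow> 'a)" by (rule polyfun_H)
  have pD: "polyfun D" unfolding D_def E_def
    by (intro polyfun_prod polyfun_pochhammer polyfun_add polyfun_diff polyfun_const polyfun_id)
  have pR: "polyfun R" unfolding R_def
    by (intro polyfun_mult polyfun_const polyfun_prod polyfun_comp[OF polyfun_H] polyfun_div
        polyfun_add polyfun_diff polyfun_id)
  have "D (of_nat (m*M)) \<noteq> 0" unfolding D_def using E_nonzero by simp
  have "H th x = R x"
    by (rule polyfun_cancel[OF pf pD pR key \<open>D (of_nat (m*M)) \<noteq> 0\<close>])
  then show ?thesis unfolding R_def .
qed

end
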